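(* Let $(\mathsf{E},\mathcal{F},\mu)$ be a probability space and let $P_{1},P_{2}$ be $\mu$-invariant Markov kernels on $\mathsf{E}$. Assume there is a measurable $\varepsilon:\mathsf{E}^{2}\to(0,\infty)$ such that for all $(x,A)\in\mathsf{E}\times\mathcal{F}$, \[ P_{2}(x,A\setminus\{x\})\ge\int_{A\setminus\{x\}}\varepsilon(x,y)P_{1}(x,\mathrm{d}y). \] Let $p\in(1,\infty]$ and $q\ge1$ with $p^{-1}+q^{-1}=1$, and for $s>0$ let $A(s):=\{(x,y)\in\mathsf{E}^{2}:s\,\varepsilon(x,y)>1\}$. Then for every $s>0$ and every $f\in\mathrm{L}_{0}^{2p}(\mu)$, \[ \mathcal{E}(P_{1},f)\le s\,\mathcal{E}(P_{2},f)+\mu\otimes P_{1}\big(A(s)^{\complement}\cap\{X\neq Y\}\big)^{1/q}\,\Phi_{p}(f), \] where $\Phi_{p}(f):=4\|f\|_{2p}^{2}$ if $p\in(1,\infty)$ and $\Phi_{\infty}(f):=\|f\|_{\mathrm{osc}}^{2}$.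
   Context: $\mathrm{L}^{r}(\mu)$ has norm $\|f\|_{r}=(\int|f|^{r}\mathrm{d}\mu)^{1/r}$, and $\mathrm{L}_{0}^{r}(\mu)$ consists of $f\in\mathrm{L}^{r}(\mu)$ with $\mu(f)=0$ (for $p=\infty$, $\mathrm{L}^{2p}$ means $\mathrm{L}^{\infty}$). $\|f\|_{\mathrm{osc}}:=\operatorname{ess\,sup}_{\mu}f-\operatorname{ess\,inf}_{\mu}f$. For a Markov kernel $P$, $\mathcal{E}(P,f):=\langle(\mathrm{Id}-P)f,f\rangle$ with the $\mathrm{L}^{2}(\mu)$ inner product, and $\mu\otimes P(B):=\int_{B}\mu(\mathrm{d}x)P(x,\mathrm{d}y)$ for measurable $B\subset\mathsf{E}^{2}$, with $(X,Y)$ denoting the coordinates on $\mathsf{E}^{2}$. *)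

theory Defs
  imports "HOL-Probability.Probability"
begin

definition markov_kernel :: "'a measure \<Rightarrow> ('a \<Rightarrow> 'a measure) \<Rightarrow> bool" where
  "markov_kernel M P \<longleftrightarrow> P \<in> M \<rightarrow>\<^sub>M prob_algebra M"

definition invariant_kernel :: "'a measure \<Rightarrow> ('a \<Rightarrow> 'a measure) \<Rightarrow> bool" where
  "invariant_kernel M P \<longleftrightarrow> (\<forall>A\<in>sets M. (\<integral>\<^sup>+ x. emeasure (P x) A \<partial>M) = emeasure M A)"

definition kernel_prod :: "'a measure \<Rightarrow> ('a \<Rightarrow> 'a measure) \<Rightarrow> ('a \<times> 'a) set \<Rightarrow> real" where
  "kernel_prod M P B = enn2real (\<integral>\<^sup>+ x. emeasure (P x) {y \<in> space M. (x, y) \<in> B} \<partial>M)"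

definition dirichlet_form :: "'a measure \<Rightarrow> ('a \<Rightarrow> 'a measure) \<Rightarrow> ('a \<Rightarrow> real) \<Rightarrow> real" where
  "dirichlet_form M P f = (\<integral> x. (f x - (\<integral> y. f y \<partial>P x)) * f x \<partial>M)"

definition in_Lr :: "'a measure \<Rightarrow> real \<Rightarrow> ('a \<Rightarrow> real) \<Rightarrow> bool" where
  "in_Lr M r f \<longleftrightarrow> f \<in> borel_measurable M \<and> integrable M (\<lambda>x. \<bar>f x\<bar> powr r)"

definition Lr_norm :: "'a measure \<Rightarrow> real \<Rightarrow> ('a \<Rightarrow> real) \<Rightarrow> real" where
  "Lr_norm M r f = (\<integral> x. \<bar>f x\<bar> powr r \<partial>M) powr (1 / r)"

definition in_Linf :: "'a measure \<Rightarrow> ('a \<Rightarrow> real) \<Rightarrow> bool" where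
  "in_Linf M f \<longleftrightarrow> f \<in> borel_measurable M \<and> esssup M (\<lambda>x. ereal \<bar>f x\<bar>) < \<infinity>"

text \<open>Oscillation norm: ess sup f - ess inf f, with ess inf f = - ess sup (-f).\<close>
definition osc_norm :: "'a measure \<Rightarrow> ('a \<Rightarrow> real) \<Rightarrow> real" where
  "osc_norm M f = real_of_ereal (esssup M (\<lambda>x. ereal (f x)) + esssup M (\<lambda>x. - ereal (f x)))"

definition in_L2p_0 :: "'a measure \<Rightarrow> ereal \<Rightarrow> ('a \<Rightarrow> real) \<Rightarrow> bool" where
  "in_L2p_0 M p f \<longleftrightarrow>
     (if p = \<infinity> then in_Linf M f else in_Lr M (2 * real_of_ereal p) f)
     \<and> integrable M f \<and> (\<integral> x. f x \<partial>M) = 0"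

definition Phi :: "'a measure \<Rightarrow> ereal \<Rightarrow> ('a \<Rightarrow> real) \<Rightarrow> real" where
  "Phi M p f = (if p = \<infinity> then (osc_norm M f)\<^sup>2
                else 4 * (Lr_norm M (2 * real_of_ereal p) f)\<^sup>2)"

end

theory Submission
  imports Defs
begin

lemma kernel_basic:
  assumes PM: "P \<in> M \<rightarrow>\<^sub>M prob_algebra M" and x: "x \<in> space M"
  shows "prob_space (P x)" "sets (P x) = sets M" "space (P x) = space M"
proof -
  have "P x \<in> space (prob_algebra M)" using measurable_space[OF PM x] .
  then show "prob_space (P x)" "sets (P x) = sets M" by (auto simp: space_prob_algebra)
  then show "space (P x) = space M" using sets_eq_imp_space_eq by blast
qed

lemma inv_bind:
  assumes M: "prob_space M" and PM: "P \<in> M \<rightarrow>\<^sub>M prob_algebra M"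
    and inv: "invariant_kernel M P"
  shows "M \<bind> P = M"
proof -
  have Ps: "P \<in> M \<rightarrow>\<^sub>M subprob_algebra M" using measurable_prob_algebraD[OF PM] .
  have ne: "space M \<noteq> {}" using M prob_space.not_empty by blast
  have s: "sets (M \<bind> P) = sets M"
    by (rule sets_bind[OF _ ne]) (rule kernel_basic(2)[OF PM])
  show ?thesis
  proof (rule measure_eqI[OF s])
    fix A assume "A \<in> sets (M \<bind> P)"
    then have A: "A \<in> sets M" using s by simp
    show "emeasure (M \<bind> P) A = emeasure M A"
      using emeasure_bind[OF ne Ps A] inv A unfolding invariant_kernel_def by simp
  qed
qed

lemma inv_nn:
  assumes M: "prob_space M" and PM: "P \<in> M \<rightarrow>\<^sub>M prob_algebra M"
    and inv: "invariant_kernel M P" and g: "g \<in> borel_measurable M"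
  shows "(\<integral>\<^sup>+x. \<integral>\<^sup>+y. g y \<partial>P x \<partial>M) = (\<integral>\<^sup>+x. g x \<partial>M)"
  using nn_integral_bind[OF g measurable_prob_algebraD[OF PM]] inv_bind[OF M PM inv] by simp

definition Kp :: "'a measure \<Rightarrow> ('a \<Rightarrow> 'a measure) \<Rightarrow> ('a \<times> 'a) measure" where
  "Kp M P = M \<bind> (\<lambda>x. distr (P x) (M \<Otimes>\<^sub>M M) (Pair x))"

lemma Kp_meas:
  assumes PM: "P \<in> M \<rightarrow>\<^sub>M prob_algebra M"
  shows "(\<lambda>x. distr (P x) (M \<Otimes>\<^sub>M M) (Pair x)) \<in> M \<rightarrow>\<^sub>M subprob_algebra (M \<Otimes>\<^sub>M M)"
proof -
  note measurable_distr2[measurable]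
  have [measurable]: "P \<in> M \<rightarrow>\<^sub>M subprob_algebra M" using measurable_prob_algebraD[OF PM] .
  show ?thesis by measurable
qed

lemma Kp_nn:
  assumes PM: "P \<in> M \<rightarrow>\<^sub>M prob_algebra M" and g: "g \<in> borel_measurable (M \<Otimes>\<^sub>M M)"
  shows "(\<integral>\<^sup>+z. g z \<partial>Kp M P) = (\<integral>\<^sup>+x. \<integral>\<^sup>+y. g (x, y) \<partial>P x \<partial>M)"
proof -
  have "(\<integral>\<^sup>+z. g z \<partial>Kp M P) = (\<integral>\<^sup>+x. \<integral>\<^sup>+z. g z \<partial>distr (P x) (M \<Otimes>\<^sub>M M) (Pair x) \<partial>M)"
    unfolding Kp_def by (rule nn_integral_bind[OF g Kp_meas[OF PM]])
  also have "\<dots> = (\<integral>\<^sup>+x. \<integral>\<^sup>+y. g (x, y) \<partial>P x \<partial>M)"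
  proof (rule nn_integral_cong)
    fix x assume x: "x \<in> space M"
    have mp: "Pair x \<in> P x \<rightarrow>\<^sub>M M \<Otimes>\<^sub>M M"
      proof -
      have eq: "(P x \<rightarrow>\<^sub>M (M \<Otimes>\<^sub>M M)) = (M \<rightarrow>\<^sub>M (M \<Otimes>\<^sub>M M))"
        by (rule measurable_cong_sets[OF kernel_basic(2)[OF PM x] refl])
      show ?thesis unfolding eq by (rule measurable_Pair1'[OF x])
    qed
    show "(\<integral>\<^sup>+z. g z \<partial>distr (P x) (M \<Otimes>\<^sub>M M) (Pair x)) = (\<integral>\<^sup>+y. g (x, y) \<partial>P x)"
      by (rule nn_integral_distr[OF mp]) (simp add: g)
  qed
  finally show ?thesis .
qed

lemma Kp_sets:
  assumes M: "prob_space M" and PM: "P \<in> M \<rightarrow>\<^sub>M prob_algebra M"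
  shows "sets (Kp M P) = sets (M \<Otimes>\<^sub>M M)"
proof -
  have ne: "space M \<noteq> {}" using M prob_space.not_empty by blast
  show ?thesis unfolding Kp_def
    by (rule sets_bind[OF _ ne]) simp
qed

lemma Kp_emeasure:
  assumes M: "prob_space M" and PM: "P \<in> M \<rightarrow>\<^sub>M prob_algebra M" and B: "B \<in> sets (M \<Otimes>\<^sub>M M)"
  shows "emeasure (Kp M P) B = (\<integral>\<^sup>+x. emeasure (P x) {y\<in>space M. (x, y) \<in> B} \<partial>M)"
proof -
  have "emeasure (Kp M P) B = (\<integral>\<^sup>+z. indicator B z \<partial>Kp M P)"
    using B Kp_sets[OF M PM] by simp
  also have "\<dots> = (\<integral>\<^sup>+x. \<integral>\<^sup>+y. indicator B (x, y) \<partial>P x \<partial>M)"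
    using B by (intro Kp_nn[OF PM]) simp
  also have "\<dots> = (\<integral>\<^sup>+x. emeasure (P x) {y\<in>space M. (x, y) \<in> B} \<partial>M)"
  proof (rule nn_integral_cong)
    fix x assume x: "x \<in> space M"
    have sx: "{y\<in>space M. (x, y) \<in> B} \<in> sets M"
      proof -
      have "{y\<in>space M. (x, y) \<in> B} = Pair x -` B"
        using sets.sets_into_space[OF B] by (auto simp: space_pair_measure)
      then show ?thesis using sets_Pair1[OF B] by simp
    qed
    have "(\<integral>\<^sup>+y. indicator B (x, y) \<partial>P x) = (\<integral>\<^sup>+y. indicator {y\<in>space M. (x, y) \<in> B} y \<partial>P x)"
      using kernel_basic(3)[OF PM x] by (intro nn_integral_cong) (auto simp: indicator_def)
    also have "\<dots> = emeasure (P x) {y\<in>space M. (x, y) \<in> B}"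
      using sx kernel_basic(2)[OF PM x] by simp
    finally show "(\<integral>\<^sup>+y. indicator B (x, y) \<partial>P x) = emeasure (P x) {y\<in>space M. (x, y) \<in> B}" .
  qed
  finally show ?thesis .
qed


lemma sq2: "((a::real) - b)^2 \<le> 2*a^2 + 2*b^2"
proof -
  have "0 \<le> (a+b)^2" by simp
  then show ?thesis by (simp add: power2_eq_square algebra_simps)
qed

lemma dirichlet_eq:
  assumes M: "prob_space M" and PM: "P \<in> M \<rightarrow>\<^sub>M prob_algebra M"
    and inv: "invariant_kernel M P"
    and f[measurable]: "f \<in> borel_measurable M" and f2: "integrable M (\<lambda>x. (f x)\<^sup>2)"
  shows "(\<integral>\<^sup>+z. ennreal ((f (snd z) - f (fst z))\<^sup>2) \<partial>Kp M P) < \<infinity>"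
    and "dirichlet_form M P f = enn2real (\<integral>\<^sup>+z. ennreal ((f (snd z) - f (fst z))\<^sup>2) \<partial>Kp M P) / 2"
proof -
  interpret prob_space M by (rule M)
  have Ps[measurable]: "P \<in> M \<rightarrow>\<^sub>M subprob_algebra M" using measurable_prob_algebraD[OF PM] .
  define I where "I = (\<integral>\<^sup>+z. ennreal ((f (snd z) - f (fst z))\<^sup>2) \<partial>Kp M P)"
  define Q where "Q x = (\<integral>\<^sup>+y. ennreal ((f y)\<^sup>2) \<partial>P x)" for x
  define H where "H x = (\<integral>\<^sup>+y. ennreal ((f y - f x)\<^sup>2) \<partial>P x)" for x
  have Qm[measurable]: "Q \<in> borel_measurable M"
    unfolding Q_def by (rule measurable_compose[OF Ps nn_integral_measurable_subprob_algebra]) simp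
  have Hm[measurable]: "H \<in> borel_measurable M"
    unfolding H_def by (rule nn_integral_measurable_subprob_algebra2[OF _ Ps]) simp
  have I_eq: "I = (\<integral>\<^sup>+x. H x \<partial>M)"
    unfolding I_def H_def by (subst Kp_nn[OF PM]) simp_all
  have f2fin: "(\<integral>\<^sup>+x. ennreal ((f x)\<^sup>2) \<partial>M) = ennreal (\<integral>x. (f x)\<^sup>2 \<partial>M)"
    using f2 by (intro nn_integral_eq_integral) auto
  have Qint: "(\<integral>\<^sup>+x. Q x \<partial>M) = ennreal (\<integral>x. (f x)\<^sup>2 \<partial>M)"
    unfolding Q_def using inv_nn[OF M PM inv, of "\<lambda>y. ennreal ((f y)\<^sup>2)"] f2fin by simp
  have HQ: "H x \<le> 2 * Q x + 2 * ennreal ((f x)\<^sup>2)" if x: "x \<in> space M" for x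
  proof -
    interpret Px: prob_space "P x" using kernel_basic(1)[OF PM x] .
    have sp: "space (P x) = space M" using kernel_basic(3)[OF PM x] .
    have mP[measurable]: "f \<in> borel_measurable (P x)"
      using f measurable_cong_sets[OF kernel_basic(2)[OF PM x] refl] by blast
    have "H x \<le> (\<integral>\<^sup>+y. 2 * ennreal ((f y)\<^sup>2) + 2 * ennreal ((f x)\<^sup>2) \<partial>P x)"
      unfolding H_def
    proof (rule nn_integral_mono)
      fix y
      have "(f y - f x)\<^sup>2 \<le> 2 * (f y)\<^sup>2 + 2 * (f x)\<^sup>2"
        by (rule sq2)
      then have "ennreal ((f y - f x)\<^sup>2) \<le> ennreal (2 * (f y)\<^sup>2 + 2 * (f x)\<^sup>2)"
        by (rule ennreal_leI)
      also have "\<dots> = 2 * ennreal ((f y)\<^sup>2) + 2 * ennreal ((f x)\<^sup>2)"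
        by (simp add: ennreal_plus ennreal_mult)
      finally show "ennreal ((f y - f x)\<^sup>2) \<le> 2 * ennreal ((f y)\<^sup>2) + 2 * ennreal ((f x)\<^sup>2)" .
    qed
    also have "\<dots> = 2 * Q x + 2 * ennreal ((f x)\<^sup>2)"
      unfolding Q_def
      by (subst nn_integral_add) (auto simp: nn_integral_cmult Px.emeasure_space_1)
    finally show ?thesis .
  qed
  have Ifin: "I < \<infinity>"
  proof -
    have "I \<le> (\<integral>\<^sup>+x. 2 * Q x + 2 * ennreal ((f x)\<^sup>2) \<partial>M)"
      unfolding I_eq by (rule nn_integral_mono) (rule HQ)
    also have "\<dots> = 2 * ennreal (\<integral>x. (f x)\<^sup>2 \<partial>M) + 2 * ennreal (\<integral>x. (f x)\<^sup>2 \<partial>M)"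
      by (subst nn_integral_add) (auto simp: nn_integral_cmult Qint f2fin)
    also have "\<dots> < \<infinity>" by (simp add: ennreal_mult_less_top)
    finally show ?thesis .
  qed
  then show "(\<integral>\<^sup>+z. ennreal ((f (snd z) - f (fst z))\<^sup>2) \<partial>Kp M P) < \<infinity>" unfolding I_def .
  have AEQ: "AE x in M. Q x \<noteq> \<infinity>"
    by (rule nn_integral_PInf_AE[OF Qm]) (simp add: Qint)
  define F where "F x = (\<integral>y. f y \<partial>P x)" for x
  define S where "S x = (\<integral>y. (f y)\<^sup>2 \<partial>P x)" for x
  have Fm[measurable]: "F \<in> borel_measurable M"
    unfolding F_def by (rule measurable_compose[OF Ps integral_measurable_subprob_algebra]) simp
  have Sm[measurable]: "S \<in> borel_measurable M"
    unfolding S_def by (rule measurable_compose[OF Ps integral_measurable_subprob_algebra]) simp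
  have key: "Q x = ennreal (S x) \<and> H x = ennreal (S x - 2 * f x * F x + (f x)\<^sup>2) \<and>
     S x - 2 * f x * F x + (f x)\<^sup>2 \<ge> 0 \<and> S x \<ge> 0"
    if x: "x \<in> space M" and Qx: "Q x \<noteq> \<infinity>" for x
  proof -
    interpret Px: prob_space "P x" using kernel_basic(1)[OF PM x] .
    have mP[measurable]: "f \<in> borel_measurable (P x)"
      using f measurable_cong_sets[OF kernel_basic(2)[OF PM x] refl] by blast
    have i2: "integrable (P x) (\<lambda>y. (f y)\<^sup>2)"
      using Qx unfolding Q_def
      by (intro integrableI_nn_integral_finite[where x="enn2real (Q x)"]) (auto simp: Q_def less_top)
    have i1: "integrable (P x) f" by (rule Px.square_integrable_imp_integrable[OF mP i2])
    have iD: "integrable (P x) (\<lambda>y. (f y)\<^sup>2 - 2 * f x * f y + (f x)\<^sup>2)"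
      using i1 i2 by auto
    have eqD: "(\<lambda>y. (f y - f x)\<^sup>2) = (\<lambda>y. (f y)\<^sup>2 - 2 * f x * f y + (f x)\<^sup>2)"
      by (auto simp: power2_diff)
    have intD: "(\<integral>y. (f y)\<^sup>2 - 2 * f x * f y + (f x)\<^sup>2 \<partial>P x) = S x - 2 * f x * F x + (f x)\<^sup>2"
      using i1 i2 unfolding S_def F_def by (simp add: Px.prob_space)
    have "H x = ennreal (\<integral>y. (f y - f x)\<^sup>2 \<partial>P x)"
      unfolding H_def using iD eqD by (intro nn_integral_eq_integral) auto
    moreover have "(\<integral>y. (f y - f x)\<^sup>2 \<partial>P x) \<ge> 0" by simp
    moreover have "Q x = ennreal (S x)"
      unfolding Q_def S_def using i2 by (intro nn_integral_eq_integral) auto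
    ultimately show ?thesis using intD eqD by (simp add: S_def)
  qed
  have AEkey: "AE x in M. Q x = ennreal (S x) \<and> H x = ennreal (S x - 2 * f x * F x + (f x)\<^sup>2) \<and>
     S x - 2 * f x * F x + (f x)\<^sup>2 \<ge> 0 \<and> S x \<ge> 0"
    using AE_space AEQ by eventually_elim (rule key)
  define G where "G x = S x - 2 * f x * F x + (f x)\<^sup>2" for x
  have Gm[measurable]: "G \<in> borel_measurable M" unfolding G_def by measurable
  have GI: "(\<integral>\<^sup>+x. ennreal (G x) \<partial>M) = I"
    unfolding I_eq G_def using AEkey by (intro nn_integral_cong_AE) auto
  have SI: "(\<integral>\<^sup>+x. ennreal (S x) \<partial>M) = ennreal (\<integral>x. (f x)\<^sup>2 \<partial>M)"
    unfolding Qint[symmetric] using AEkey by (intro nn_integral_cong_AE) auto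
  have Gint: "integrable M G"
    using GI Ifin AEkey unfolding G_def
    by (intro integrableI_nn_integral_finite[where x="enn2real I"]) (auto simp: G_def less_top)
  have Sint: "integrable M S"
    using SI AEkey by (intro integrableI_nn_integral_finite) auto
  have intG: "(\<integral>x. G x \<partial>M) = enn2real I"
    using GI AEkey by (subst integral_eq_nn_integral) (auto simp: G_def)
  have intS: "(\<integral>x. S x \<partial>M) = (\<integral>x. (f x)\<^sup>2 \<partial>M)"
    using SI AEkey by (subst integral_eq_nn_integral) auto
  have "dirichlet_form M P f = (\<integral>x. G x / 2 + (f x)\<^sup>2 / 2 - S x / 2 \<partial>M)"
    unfolding dirichlet_form_def F_def[symmetric]
    by (rule Bochner_Integration.integral_cong[OF refl]) (simp add: G_def power2_eq_square field_simps)
  also have "\<dots> = (\<integral>x. G x \<partial>M) / 2 + (\<integral>x. (f x)\<^sup>2 \<partial>M) / 2 - (\<integral>x. S x \<partial>M) / 2"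
    using Gint Sint f2 by simp
  also have "\<dots> = enn2real I / 2" using intG intS by simp
  finally show "dirichlet_form M P f = enn2real (\<integral>\<^sup>+z. ennreal ((f (snd z) - f (fst z))\<^sup>2) \<partial>Kp M P) / 2"
    unfolding I_def .
qed


lemma minor_fun:
  assumes PM1: "P1 \<in> M \<rightarrow>\<^sub>M prob_algebra M" and PM2: "P2 \<in> M \<rightarrow>\<^sub>M prob_algebra M"
    and x: "x \<in> space M"
    and em[measurable]: "(\<lambda>y. eps x y) \<in> borel_measurable M"
    and sx[measurable]: "{x} \<in> sets M"
    and minor: "\<And>A. A \<in> sets M \<Longrightarrow>
        emeasure (P2 x) (A - {x}) \<ge> (\<integral>\<^sup>+ y \<in> A - {x}. ennreal (eps x y) \<partial>P1 x)"
    and h[measurable]: "h \<in> borel_measurable M"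
  shows "(\<integral>\<^sup>+y. ennreal (eps x y) * indicator (space M - {x}) y * h y \<partial>P1 x)
       \<le> (\<integral>\<^sup>+y. indicator (space M - {x}) y * h y \<partial>P2 x)"
proof -
  have s1: "sets (P1 x) = sets M" and s2: "sets (P2 x) = sets M"
    using kernel_basic(2)[OF PM1 x] kernel_basic(2)[OF PM2 x] by auto
  have sp1: "space (P1 x) = space M" and sp2: "space (P2 x) = space M"
    using kernel_basic(3)[OF PM1 x] kernel_basic(3)[OF PM2 x] by auto
  define d1 where "d1 y = ennreal (eps x y) * indicator (space M - {x}) y" for y
  define d2 where "d2 y = (indicator (space M - {x}) y :: ennreal)" for y
  have d1m: "d1 \<in> borel_measurable (P1 x)"
    unfolding d1_def measurable_cong_sets[OF s1 refl] by measurable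
  have d2m: "d2 \<in> borel_measurable (P2 x)"
    unfolding d2_def measurable_cong_sets[OF s2 refl] by measurable
  have h1: "h \<in> borel_measurable (P1 x)" unfolding measurable_cong_sets[OF s1 refl] by simp
  have h2: "h \<in> borel_measurable (P2 x)" unfolding measurable_cong_sets[OF s2 refl] by simp
  have le: "density (P1 x) d1 \<le> density (P2 x) d2"
  proof -
    have "emeasure (density (P1 x) d1) A \<le> emeasure (density (P2 x) d2) A" for A
    proof (cases "A \<in> sets M")
      case True
      then have A1: "A \<in> sets (P1 x)" and A2: "A \<in> sets (P2 x)" using s1 s2 by auto
      have Asp: "A \<subseteq> space M" using sets.sets_into_space[OF True] .
      have Ax: "A - {x} \<in> sets M" using True sx by auto
      have "emeasure (density (P1 x) d1) A = (\<integral>\<^sup>+ y \<in> A - {x}. ennreal (eps x y) \<partial>P1 x)"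
        unfolding emeasure_density[OF d1m A1] d1_def
        using Asp by (intro nn_integral_cong) (auto simp: indicator_def)
      also have "\<dots> \<le> emeasure (P2 x) (A - {x})" using minor[OF True] .
      also have "\<dots> = emeasure (density (P2 x) d2) A"
      proof -
        have "(\<integral>\<^sup>+y. d2 y * indicator A y \<partial>P2 x) = (\<integral>\<^sup>+y. indicator (A - {x}) y \<partial>P2 x)"
          using Asp sp2 by (intro nn_integral_cong) (auto simp: d2_def indicator_def)
        also have "\<dots> = emeasure (P2 x) (A - {x})" using Ax s2 by simp
        finally show ?thesis unfolding emeasure_density[OF d2m A2] by simp
      qed
      finally show ?thesis .
    next
      case False
      then show ?thesis using s1 s2 by (simp add: emeasure_notin_sets)
    qed
    then show ?thesis unfolding le_measure_iff using s1 s2 sp1 sp2 by (auto simp: le_fun_def)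
  qed
  have "(\<integral>\<^sup>+y. h y \<partial>density (P1 x) d1) \<le> (\<integral>\<^sup>+y. h y \<partial>density (P2 x) d2)"
    by (rule nn_integral_mono_measure[OF _ le]) (simp add: s1 s2)
  then show ?thesis
    unfolding nn_integral_density[OF d1m h1] nn_integral_density[OF d2m h2] d1_def d2_def .
qed

lemma holder_ind:
  fixes h :: "'b \<Rightarrow> real"
  assumes N: "finite_measure N" and B: "B \<in> sets N" and h[measurable]: "h \<in> borel_measurable N"
    and h0: "\<And>z. 0 \<le> h z"
    and r: "1 < r" and q: "1 < q" and rq: "1/r + 1/q = 1"
    and hint: "integrable N (\<lambda>z. h z powr r)"
  shows "(\<integral>\<^sup>+z. ennreal (h z) * indicator B z \<partial>N)
     \<le> ennreal (measure N B powr (1/q) * (\<integral>z. h z powr r \<partial>N) powr (1/r))"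
proof -
  interpret finite_measure N by (rule N)
  define a where "a = measure N B"
  define b where "b = (\<integral>z. h z powr r \<partial>N)"
  have a0: "a \<ge> 0" unfolding a_def by simp
  have b0: "b \<ge> 0" unfolding b_def by (simp add: h0)
  show ?thesis
  proof (cases "a = 0")
    case True
    then have "B \<in> null_sets N" using B unfolding a_def by (simp add: emeasure_eq_measure null_sets_def)
    then have "AE z in N. z \<notin> B" by (rule AE_not_in)
    then have "(\<integral>\<^sup>+z. ennreal (h z) * indicator B z \<partial>N) = (\<integral>\<^sup>+z. 0 \<partial>N)"
      by (intro nn_integral_cong_AE) (auto elim!: eventually_mono)
    then show ?thesis by simp
  next
    case anz: False
    show ?thesis
    proof (cases "b = 0")
      case True
      have "AE z in N. h z powr r = 0"
        using True hint unfolding b_def by (subst integral_nonneg_eq_0_iff_AE[symmetric]) (auto simp: h0)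
      then have "AE z in N. h z = 0" by (auto elim!: eventually_mono)
      then have "(\<integral>\<^sup>+z. ennreal (h z) * indicator B z \<partial>N) = (\<integral>\<^sup>+z. 0 \<partial>N)"
        by (intro nn_integral_cong_AE) (auto elim!: eventually_mono)
      then show ?thesis by simp
    next
      case bnz: False
      have apos: "a > 0" using a0 anz by simp
      have bpos: "b > 0" using b0 bnz by simp
      define \<alpha> where "\<alpha> = a powr (1/q)"
      define \<beta> where "\<beta> = b powr (1/r)"
      have \<alpha>pos: "\<alpha> > 0" and \<beta>pos: "\<beta> > 0" using apos bpos unfolding \<alpha>_def \<beta>_def by auto
      have \<alpha>q: "\<alpha> powr q = a" unfolding \<alpha>_def using apos q by (simp add: powr_powr)
      have \<beta>r: "\<beta> powr r = b" unfolding \<beta>_def using bpos r by (simp add: powr_powr)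
      define g where "g z = \<alpha> * \<beta> * (indicator B z / (q * a) + h z powr r / (r * b))" for z
      have pw: "h z * indicator B z \<le> g z" for z
      proof -
        have Y: "(indicator B z / \<alpha>) * (h z / \<beta>) \<le> (indicator B z / \<alpha>) powr q / q + (h z / \<beta>) powr r / r"
          by (rule Youngs_inequality[OF q r]) (use rq h0 \<alpha>pos \<beta>pos in \<open>auto simp: add.commute\<close>)
        have e1: "(indicator B z / \<alpha>) powr q = indicator B z / a"
          using \<alpha>pos \<alpha>q q by (auto simp: indicator_def powr_divide)
        have e2: "(h z / \<beta>) powr r = h z powr r / b"
          using \<beta>pos \<beta>r h0 by (simp add: powr_divide)
        have "h z * indicator B z = \<alpha> * \<beta> * ((indicator B z / \<alpha>) * (h z / \<beta>))"
          using \<alpha>pos \<beta>pos by (simp add: field_simps)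
        also have "\<dots> \<le> \<alpha> * \<beta> * (indicator B z / a / q + h z powr r / b / r)"
          using Y e1 e2 \<alpha>pos \<beta>pos by (intro mult_left_mono) auto
        finally show ?thesis unfolding g_def by (simp add: field_simps)
      qed
      have iB: "integrable N (indicator B :: 'b \<Rightarrow> real)"
        using B by (intro integrable_real_indicator) (simp_all add: less_top[symmetric])
      have gint: "integrable N g"
        unfolding g_def using hint iB by (intro integrable_mult_right integrable_add integrable_divide) auto
      have intg: "(\<integral>z. g z \<partial>N) = \<alpha> * \<beta>"
      proof -
        have "(\<integral>z. g z \<partial>N) = \<alpha> * \<beta> * (a / (q * a) + b / (r * b))"
          unfolding g_def a_def b_def using hint iB B by (simp add: integral_add)
        also have "\<dots> = \<alpha> * \<beta>" using apos bpos rq by (simp add: add.commute)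
        finally show ?thesis .
      qed
      have g0: "0 \<le> g z" for z using pw[of z] h0[of z] by (smt (verit) indicator_pos_le mult_nonneg_nonneg)
      have "(\<integral>\<^sup>+z. ennreal (h z) * indicator B z \<partial>N) \<le> (\<integral>\<^sup>+z. ennreal (g z) \<partial>N)"
        by (intro nn_integral_mono) (metis ennreal_indicator ennreal_leI ennreal_mult'' indicator_pos_le pw)
      also have "\<dots> = ennreal (\<alpha> * \<beta>)"
        using gint g0 intg by (subst nn_integral_eq_integral) auto
      finally show ?thesis unfolding \<alpha>_def \<beta>_def a_def b_def .
    qed
  qed
qed


lemma Kp_prob:
  assumes M: "prob_space M" and PM: "P \<in> M \<rightarrow>\<^sub>M prob_algebra M"
  shows "prob_space (Kp M P)"
proof
  interpret prob_space M by (rule M)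
  have sp: "space (Kp M P) = space M \<times> space M"
    using sets_eq_imp_space_eq[OF Kp_sets[OF M PM]] by (simp add: space_pair_measure)
  have "emeasure (Kp M P) (space M \<times> space M) = (\<integral>\<^sup>+x. emeasure (P x) {y\<in>space M. (x, y) \<in> space M \<times> space M} \<partial>M)"
    by (rule Kp_emeasure[OF M PM]) (simp add: sets.top[of "M \<Otimes>\<^sub>M M", unfolded space_pair_measure])
  also have "\<dots> = (\<integral>\<^sup>+x. 1 \<partial>M)"
  proof (rule nn_integral_cong)
    fix x assume x: "x \<in> space M"
    interpret Px: prob_space "P x" using kernel_basic(1)[OF PM x] .
    have "{y\<in>space M. (x, y) \<in> space M \<times> space M} = space (P x)"
      using x kernel_basic(3)[OF PM x] by auto
    then show "emeasure (P x) {y\<in>space M. (x, y) \<in> space M \<times> space M} = 1"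
      by (simp add: Px.emeasure_space_1)
  qed
  also have "\<dots> = 1" by (simp add: emeasure_space_1)
  finally show "emeasure (Kp M P) (space (Kp M P)) = 1" unfolding sp .
qed

lemma AE_Kp:
  assumes M: "prob_space M" and PM: "P \<in> M \<rightarrow>\<^sub>M prob_algebra M"
    and Q[measurable]: "Measurable.pred (M \<Otimes>\<^sub>M M) Q"
    and ae: "AE x in M. AE y in P x. Q (x, y)"
  shows "AE z in Kp M P. Q z"
proof -
  have "(AE z in Kp M P. Q z) \<longleftrightarrow> (AE x in M. AE z in distr (P x) (M \<Otimes>\<^sub>M M) (Pair x). Q z)"
    unfolding Kp_def by (rule AE_bind[OF Kp_meas[OF PM] Q])
  also have "\<dots> \<longleftrightarrow> (AE x in M. AE y in P x. Q (x, y))"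
  proof (rule AE_cong)
    fix x assume x: "x \<in> space M"
    have eq: "(P x \<rightarrow>\<^sub>M (M \<Otimes>\<^sub>M M)) = (M \<rightarrow>\<^sub>M (M \<Otimes>\<^sub>M M))"
      by (rule measurable_cong_sets[OF kernel_basic(2)[OF PM x] refl])
    have mp: "Pair x \<in> P x \<rightarrow>\<^sub>M (M \<Otimes>\<^sub>M M)" unfolding eq by (rule measurable_Pair1'[OF x])
    show "(AE z in distr (P x) (M \<Otimes>\<^sub>M M) (Pair x). Q z) \<longleftrightarrow> (AE y in P x. Q (x, y))"
      by (rule AE_distr_iff[OF mp]) simp
  qed
  finally show ?thesis using ae by simp
qed

lemma AE_kernel_inv:
  assumes M: "prob_space M" and PM: "P \<in> M \<rightarrow>\<^sub>M prob_algebra M"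
    and inv: "invariant_kernel M P"
    and G[measurable]: "Measurable.pred M G" and ae: "AE y in M. G y"
  shows "AE x in M. AE y in P x. G y"
proof -
  define N where "N = {y\<in>space M. \<not> G y}"
  have N[measurable]: "N \<in> sets M" unfolding N_def by measurable
  have N0: "emeasure M N = 0" using ae AE_iff_measurable[OF N] N_def by auto
  have "(\<integral>\<^sup>+x. emeasure (P x) N \<partial>M) = 0"
    using inv N N0 unfolding invariant_kernel_def by auto
  moreover have "(\<lambda>x. emeasure (P x) N) \<in> borel_measurable M"
    using measurable_emeasure_kernel[OF measurable_prob_algebraD[OF PM] N] .
  ultimately have "AE x in M. emeasure (P x) N = 0"
    using nn_integral_0_iff_AE by blast
  then show ?thesis
  proof (rule AE_mp[OF _ AE_I2], intro impI)
    fix x assume x: "x \<in> space M" and e: "emeasure (P x) N = 0"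
    have "N \<in> sets (P x)" using kernel_basic(2)[OF PM x] N by simp
    moreover have "{y\<in>space (P x). \<not> G y} = N" using kernel_basic(3)[OF PM x] N_def by simp
    ultimately show "AE y in P x. G y" using AE_iff_measurable e by blast
  qed
qed

lemma partB_inf:
  assumes M: "prob_space M" and PM: "P \<in> M \<rightarrow>\<^sub>M prob_algebra M"
    and inv: "invariant_kernel M P"
    and f[measurable]: "f \<in> borel_measurable M" and fi: "in_Linf M f"
    and B: "B \<in> sets (M \<Otimes>\<^sub>M M)"
  shows "(\<integral>\<^sup>+z. ennreal ((f (snd z) - f (fst z))\<^sup>2) * indicator B z \<partial>Kp M P)
      \<le> ennreal (measure (Kp M P) B * (osc_norm M f)\<^sup>2)"
proof -
  interpret prob_space M by (rule M)
  interpret K: prob_space "Kp M P" by (rule Kp_prob[OF M PM])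
  define S where "S = esssup M (\<lambda>x. ereal (f x))"
  define S' where "S' = esssup M (\<lambda>x. - ereal (f x))"
  define C where "C = esssup M (\<lambda>x. ereal \<bar>f x\<bar>)"
  have Cfin: "C < \<infinity>" using fi unfolding in_Linf_def C_def by simp
  have aS: "AE x in M. ereal (f x) \<le> S" unfolding S_def by (rule esssup_AE)
  have aS': "AE x in M. - ereal (f x) \<le> S'" unfolding S'_def by (rule esssup_AE)
  have "S \<le> C" unfolding S_def C_def by (intro esssup_AE_mono AE_I2) auto
  moreover have "S \<noteq> -\<infinity>"
  proof
    assume "S = -\<infinity>"
    then have "AE x in M. False" using aS by (auto elim!: eventually_mono)
    then show False using AE_False by simp
  qed
  ultimately have Sfin: "\<bar>S\<bar> \<noteq> \<infinity>" using Cfin by auto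
  have "S' \<le> C" unfolding S'_def C_def by (intro esssup_AE_mono AE_I2) auto
  moreover have "S' \<noteq> -\<infinity>"
  proof
    assume "S' = -\<infinity>"
    then have "AE x in M. False" using aS' by (auto elim!: eventually_mono)
    then show False using AE_False by simp
  qed
  ultimately have S'fin: "\<bar>S'\<bar> \<noteq> \<infinity>" using Cfin by auto
  define s where "s = real_of_ereal S"
  define s' where "s' = real_of_ereal S'"
  have Ss: "S = ereal s" and Ss': "S' = ereal s'" using Sfin S'fin unfolding s_def s'_def by auto
  have osc: "osc_norm M f = s + s'" unfolding osc_norm_def S_def[symmetric] S'_def[symmetric] Ss Ss' by simp
  have G: "AE y in M. f y \<le> s \<and> - f y \<le> s'"
    using aS aS' by eventually_elim (simp add: Ss Ss')
  have G2: "AE x in M. AE y in P x. f y \<le> s \<and> - f y \<le> s'"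
    by (rule AE_kernel_inv[OF M PM inv _ G]) measurable
  have "AE x in M. AE y in P x. (f y - f x)\<^sup>2 \<le> (osc_norm M f)\<^sup>2"
    using G G2
  proof eventually_elim
    case (elim x)
    then show ?case
    proof (elim AE_mp, intro AE_I2 impI)
      fix y assume y: "f y \<le> s \<and> - f y \<le> s'"
      have "f x \<le> s" "- f x \<le> s'" using elim(1) by auto
      with y have "\<bar>f y - f x\<bar> \<le> s + s'" unfolding abs_le_iff by linarith
      then have "\<bar>f y - f x\<bar>\<^sup>2 \<le> (s + s')\<^sup>2" by (rule power_mono) simp
      then show "(f y - f x)\<^sup>2 \<le> (osc_norm M f)\<^sup>2" unfolding osc by simp
    qed
  qed
  then have aeK: "AE z in Kp M P. (f (snd z) - f (fst z))\<^sup>2 \<le> (osc_norm M f)\<^sup>2"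
    by (intro AE_Kp[OF M PM]) auto
  have BK: "B \<in> sets (Kp M P)" using B Kp_sets[OF M PM] by simp
  have "(\<integral>\<^sup>+z. ennreal ((f (snd z) - f (fst z))\<^sup>2) * indicator B z \<partial>Kp M P)
      \<le> (\<integral>\<^sup>+z. ennreal ((osc_norm M f)\<^sup>2) * indicator B z \<partial>Kp M P)"
    using aeK by (intro nn_integral_mono_AE) (auto elim!: eventually_mono intro!: mult_right_mono ennreal_leI)
  also have "\<dots> = ennreal ((osc_norm M f)\<^sup>2) * emeasure (Kp M P) B"
    using BK by (simp add: nn_integral_cmult_indicator)
  also have "\<dots> = ennreal (measure (Kp M P) B * (osc_norm M f)\<^sup>2)"
    by (simp add: K.emeasure_eq_measure ennreal_mult mult.commute)
  finally show ?thesis .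
qed


lemma diff_powr_bound:
  fixes a b t :: real assumes t: "1 \<le> t"
  shows "((a - b)\<^sup>2) powr t \<le> 2 powr (2*t) * (\<bar>a\<bar> powr (2*t) + \<bar>b\<bar> powr (2*t))"
proof -
  have e: "(a - b)\<^sup>2 = \<bar>a - b\<bar> powr 2"
    by (cases "a = b") (simp_all add: powr_numeral)
  have "((a - b)\<^sup>2) powr t = \<bar>a - b\<bar> powr (2*t)" unfolding e powr_powr by (simp add: mult.commute)
  also have "\<dots> \<le> (2 * max \<bar>a\<bar> \<bar>b\<bar>) powr (2*t)"
    by (rule powr_mono2) (use t in auto)
  also have "\<dots> = 2 powr (2*t) * max \<bar>a\<bar> \<bar>b\<bar> powr (2*t)"
    by (simp add: powr_mult)
  also have "max \<bar>a\<bar> \<bar>b\<bar> powr (2*t) \<le> \<bar>a\<bar> powr (2*t) + \<bar>b\<bar> powr (2*t)"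
    by (cases "\<bar>a\<bar> \<le> \<bar>b\<bar>") (auto simp: max_def)
  then have "2 powr (2*t) * max \<bar>a\<bar> \<bar>b\<bar> powr (2*t) \<le> 2 powr (2*t) * (\<bar>a\<bar> powr (2*t) + \<bar>b\<bar> powr (2*t))"
    by (rule mult_left_mono) simp
  finally show ?thesis .
qed

lemma partB_fin:
  assumes M: "prob_space M" and PM: "P \<in> M \<rightarrow>\<^sub>M prob_algebra M"
    and inv: "invariant_kernel M P"
    and f[measurable]: "f \<in> borel_measurable M"
    and r: "1 < r" and q: "1 < q" and rq: "1/r + 1/q = 1"
    and fint: "integrable M (\<lambda>x. \<bar>f x\<bar> powr (2*r))"
    and B: "B \<in> sets (M \<Otimes>\<^sub>M M)"
  shows "(\<integral>\<^sup>+z. ennreal ((f (snd z) - f (fst z))\<^sup>2) * indicator B z \<partial>Kp M P)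
      \<le> ennreal (measure (Kp M P) B powr (1/q) * (8 * (\<integral>x. \<bar>f x\<bar> powr (2*r) \<partial>M) powr (1/r)))"
proof -
  interpret prob_space M by (rule M)
  interpret K: prob_space "Kp M P" by (rule Kp_prob[OF M PM])
  have sK: "sets (Kp M P) = sets (M \<Otimes>\<^sub>M M)" by (rule Kp_sets[OF M PM])
  define h where "h z = (f (snd z) - f (fst z))\<^sup>2" for z
  define c where "c = (2::real) powr (2*r)"
  define Nf where "Nf = (\<integral>x. \<bar>f x\<bar> powr (2*r) \<partial>M)"
  have Nf0: "0 \<le> Nf" unfolding Nf_def by simp
  have hm: "h \<in> borel_measurable (M \<Otimes>\<^sub>M M)" unfolding h_def by measurable
  have hK: "h \<in> borel_measurable (Kp M P)" using hm measurable_cong_sets[OF sK refl] by blast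
  have hrm: "(\<lambda>z. h z powr r) \<in> borel_measurable (M \<Otimes>\<^sub>M M)" using hm by measurable
  have hrK: "(\<lambda>z. h z powr r) \<in> borel_measurable (Kp M P)" using hrm measurable_cong_sets[OF sK refl] by blast
  have fnn: "(\<integral>\<^sup>+x. ennreal (\<bar>f x\<bar> powr (2*r)) \<partial>M) = ennreal Nf"
    unfolding Nf_def using fint by (intro nn_integral_eq_integral) auto
  have "(\<integral>\<^sup>+z. ennreal (h z powr r) \<partial>Kp M P)
      \<le> (\<integral>\<^sup>+z. ennreal c * ennreal (\<bar>f (snd z)\<bar> powr (2*r)) + ennreal c * ennreal (\<bar>f (fst z)\<bar> powr (2*r)) \<partial>Kp M P)"
  proof (rule nn_integral_mono)
    fix z
    have "h z powr r \<le> c * (\<bar>f (snd z)\<bar> powr (2*r) + \<bar>f (fst z)\<bar> powr (2*r))"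
      unfolding h_def c_def using diff_powr_bound[of r "f (snd z)" "f (fst z)"] r by simp
    then show "ennreal (h z powr r) \<le> ennreal c * ennreal (\<bar>f (snd z)\<bar> powr (2*r)) + ennreal c * ennreal (\<bar>f (fst z)\<bar> powr (2*r))"
      by (simp add: c_def ennreal_mult[symmetric] ennreal_plus[symmetric] distrib_left ennreal_leI del: ennreal_plus)
  qed
  also have "\<dots> = ennreal c * (\<integral>\<^sup>+z. ennreal (\<bar>f (snd z)\<bar> powr (2*r)) \<partial>Kp M P)
      + ennreal c * (\<integral>\<^sup>+z. ennreal (\<bar>f (fst z)\<bar> powr (2*r)) \<partial>Kp M P)"
    using sK by (subst nn_integral_add) (auto simp: nn_integral_cmult measurable_cong_sets[OF sK refl])
  also have "(\<integral>\<^sup>+z. ennreal (\<bar>f (snd z)\<bar> powr (2*r)) \<partial>Kp M P) = ennreal Nf"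
  proof -
    have "(\<integral>\<^sup>+z. ennreal (\<bar>f (snd z)\<bar> powr (2*r)) \<partial>Kp M P) = (\<integral>\<^sup>+x. \<integral>\<^sup>+y. ennreal (\<bar>f y\<bar> powr (2*r)) \<partial>P x \<partial>M)"
      by (subst Kp_nn[OF PM]) simp_all
    also have "\<dots> = ennreal Nf" using inv_nn[OF M PM inv, of "\<lambda>y. ennreal (\<bar>f y\<bar> powr (2*r))"] fnn by simp
    finally show ?thesis .
  qed
  also have "(\<integral>\<^sup>+z. ennreal (\<bar>f (fst z)\<bar> powr (2*r)) \<partial>Kp M P) = ennreal Nf"
  proof -
    have "(\<integral>\<^sup>+z. ennreal (\<bar>f (fst z)\<bar> powr (2*r)) \<partial>Kp M P) = (\<integral>\<^sup>+x. \<integral>\<^sup>+y. ennreal (\<bar>f x\<bar> powr (2*r)) \<partial>P x \<partial>M)"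
      by (subst Kp_nn[OF PM]) simp_all
    also have "\<dots> = (\<integral>\<^sup>+x. ennreal (\<bar>f x\<bar> powr (2*r)) \<partial>M)"
    proof (rule nn_integral_cong)
      fix x assume x: "x \<in> space M"
      interpret Px: prob_space "P x" using kernel_basic(1)[OF PM x] .
      show "(\<integral>\<^sup>+y. ennreal (\<bar>f x\<bar> powr (2*r)) \<partial>P x) = ennreal (\<bar>f x\<bar> powr (2*r))"
        by (simp add: Px.emeasure_space_1)
    qed
    also have "\<dots> = ennreal Nf" by (rule fnn)
    finally show ?thesis .
  qed
  finally have hb0: "(\<integral>\<^sup>+z. ennreal (h z powr r) \<partial>Kp M P) \<le> ennreal c * ennreal Nf + ennreal c * ennreal Nf" .
  have c0: "0 \<le> c" unfolding c_def by simp
  have "ennreal (2 * c * Nf) = ennreal (c * Nf + c * Nf)" by (simp add: algebra_simps)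
  also have "\<dots> = ennreal (c * Nf) + ennreal (c * Nf)"
    using c0 Nf0 by (intro ennreal_plus) auto
  also have "\<dots> = ennreal c * ennreal Nf + ennreal c * ennreal Nf"
    using c0 Nf0 by (simp only: ennreal_mult)
  finally have hb: "(\<integral>\<^sup>+z. ennreal (h z powr r) \<partial>Kp M P) \<le> ennreal (2 * c * Nf)" using hb0 by simp
  have hint: "integrable (Kp M P) (\<lambda>z. h z powr r)"
  proof (rule integrableI_bounded)
    show "(\<lambda>z. h z powr r) \<in> borel_measurable (Kp M P)" by (rule hrK)
    have "(\<integral>\<^sup>+z. ennreal (norm (h z powr r)) \<partial>Kp M P) = (\<integral>\<^sup>+z. ennreal (h z powr r) \<partial>Kp M P)" by simp
    also have "\<dots> < \<infinity>" using hb by (simp add: le_less_trans)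
    finally show "(\<integral>\<^sup>+z. ennreal (norm (h z powr r)) \<partial>Kp M P) < \<infinity>" .
  qed
  have ib: "(\<integral>z. h z powr r \<partial>Kp M P) \<le> 2 * c * Nf"
  proof -
    have "(\<integral>z. h z powr r \<partial>Kp M P) = enn2real (\<integral>\<^sup>+z. ennreal (h z powr r) \<partial>Kp M P)"
      by (rule integral_eq_nn_integral[OF hrK]) simp
    also have "\<dots> \<le> 2 * c * Nf" using hb Nf0 by (simp add: c_def enn2real_leI)
    finally show ?thesis .
  qed
  have "(\<integral>z. h z powr r \<partial>Kp M P) powr (1/r) \<le> (2 * c * Nf) powr (1/r)"
    using ib r by (intro powr_mono2) auto
  also have "\<dots> = 2 powr (1/r) * c powr (1/r) * Nf powr (1/r)"
    using Nf0 by (simp add: c_def powr_mult)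
  also have "c powr (1/r) = 4" unfolding c_def using r by (simp add: powr_powr)
  also have "2 powr (1/r) * 4 * Nf powr (1/r) \<le> 8 * Nf powr (1/r)"
  proof -
    have "2 powr (1/r) \<le> 2 powr 1" using r by (intro powr_mono) auto
    then show ?thesis by (simp add: mult_right_mono)
  qed
  finally have pb: "(\<integral>z. h z powr r \<partial>Kp M P) powr (1/r) \<le> 8 * Nf powr (1/r)" .
  have BK: "B \<in> sets (Kp M P)" using B sK by simp
  have "(\<integral>\<^sup>+z. ennreal (h z) * indicator B z \<partial>Kp M P)
      \<le> ennreal (measure (Kp M P) B powr (1/q) * (\<integral>z. h z powr r \<partial>Kp M P) powr (1/r))"
    by (rule holder_ind[OF _ BK hK _ r q rq hint]) (auto simp: h_def K.finite_measure_axioms)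
  also have "\<dots> \<le> ennreal (measure (Kp M P) B powr (1/q) * (8 * Nf powr (1/r)))"
    using pb by (intro ennreal_leI mult_left_mono) auto
  finally show ?thesis unfolding h_def Nf_def .
qed

lemma partA:
  assumes M: "prob_space M" and PM1: "P1 \<in> M \<rightarrow>\<^sub>M prob_algebra M" and PM2: "P2 \<in> M \<rightarrow>\<^sub>M prob_algebra M"
    and diag: "{(x, y) \<in> space M \<times> space M. x = y} \<in> sets (M \<Otimes>\<^sub>M M)"
    and eps_meas: "(\<lambda>(x, y). eps x y) \<in> borel_measurable (M \<Otimes>\<^sub>M M)"
    and minor: "\<And>x A. x \<in> space M \<Longrightarrow> A \<in> sets M \<Longrightarrow>
        emeasure (P2 x) (A - {x}) \<ge> (\<integral>\<^sup>+ y \<in> A - {x}. ennreal (eps x y) \<partial>P1 x)"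
    and s: "0 \<le> s"
    and f[measurable]: "f \<in> borel_measurable M"
    and A: "{(x, y) \<in> space M \<times> space M. 1 < s * eps x y \<and> x \<noteq> y} \<in> sets (M \<Otimes>\<^sub>M M)"
  shows "(\<integral>\<^sup>+z. ennreal ((f (snd z) - f (fst z))\<^sup>2) * indicator {(x, y) \<in> space M \<times> space M. 1 < s * eps x y \<and> x \<noteq> y} z \<partial>Kp M P1)
      \<le> ennreal s * (\<integral>\<^sup>+z. ennreal ((f (snd z) - f (fst z))\<^sup>2) \<partial>Kp M P2)"
proof -
  define Dg where "Dg = {(x, y) \<in> space M \<times> space M. x = y}"
  define Od where "Od = space M \<times> space M - Dg"
  define Aset where "Aset = {(x, y) \<in> space M \<times> space M. 1 < s * eps x y \<and> x \<noteq> y}"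
  define D where "D z = ennreal ((f (snd z) - f (fst z))\<^sup>2)" for z
  have sK1: "sets (Kp M P1) = sets (M \<Otimes>\<^sub>M M)" by (rule Kp_sets[OF M PM1])
  have Dgm[measurable]: "Dg \<in> sets (M \<Otimes>\<^sub>M M)" unfolding Dg_def by (rule diag)
  have Om[measurable]: "Od \<in> sets (M \<Otimes>\<^sub>M M)" unfolding Od_def
    using Dgm sets.top[of "M \<Otimes>\<^sub>M M"] by (auto simp: space_pair_measure)
  have em2[measurable]: "(\<lambda>z. eps (fst z) (snd z)) \<in> borel_measurable (M \<Otimes>\<^sub>M M)"
    using eps_meas by (simp add: case_prod_beta')
  have Dm[measurable]: "D \<in> borel_measurable (M \<Otimes>\<^sub>M M)" unfolding D_def by measurable
  have "(\<integral>\<^sup>+z. D z * indicator Aset z \<partial>Kp M P1)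
      \<le> (\<integral>\<^sup>+z. ennreal s * (ennreal (eps (fst z) (snd z)) * indicator Od z * D z) \<partial>Kp M P1)"
  proof (rule nn_integral_mono)
    fix z
    show "D z * indicator Aset z \<le> ennreal s * (ennreal (eps (fst z) (snd z)) * indicator Od z * D z)"
    proof (cases "z \<in> Aset")
      case True
      then obtain x y where z: "z = (x, y)" and xy: "x \<in> space M" "y \<in> space M" "1 < s * eps x y" "x \<noteq> y"
        unfolding Aset_def by auto
      have zO: "z \<in> Od" using z xy unfolding Od_def Dg_def by auto
      have "(f y - f x)\<^sup>2 \<le> (s * eps x y) * (f y - f x)\<^sup>2"
        using mult_right_mono[of 1 "s * eps x y" "(f y - f x)\<^sup>2"] xy(3) by simp
      then have "ennreal ((f y - f x)\<^sup>2) \<le> ennreal s * (ennreal (eps x y) * ennreal ((f y - f x)\<^sup>2))"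
      proof -
        have e0: "0 < eps x y"
        proof (rule ccontr)
          assume "\<not> 0 < eps x y"
          then have "s * eps x y \<le> 0" using s by (simp add: mult_nonneg_nonpos)
          then show False using xy(3) by simp
        qed
        have "ennreal ((f y - f x)\<^sup>2) \<le> ennreal (s * (eps x y * (f y - f x)\<^sup>2))"
          using \<open>(f y - f x)\<^sup>2 \<le> (s * eps x y) * (f y - f x)\<^sup>2\<close> by (intro ennreal_leI) (simp add: mult.assoc)
        also have "\<dots> = ennreal s * (ennreal (eps x y) * ennreal ((f y - f x)\<^sup>2))"
          using s e0 by (simp add: ennreal_mult)
        finally show ?thesis .
      qed
      then show ?thesis using True zO z unfolding D_def by simp
    qed simp
  qed
  also have "\<dots> = ennreal s * (\<integral>\<^sup>+z. ennreal (eps (fst z) (snd z)) * indicator Od z * D z \<partial>Kp M P1)"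
    by (rule nn_integral_cmult) (simp add: measurable_cong_sets[OF sK1 refl])
  also have "(\<integral>\<^sup>+z. ennreal (eps (fst z) (snd z)) * indicator Od z * D z \<partial>Kp M P1)
      = (\<integral>\<^sup>+x. \<integral>\<^sup>+y. ennreal (eps x y) * indicator Od (x, y) * D (x, y) \<partial>P1 x \<partial>M)"
    by (subst Kp_nn[OF PM1]) simp_all
  also have "\<dots> \<le> (\<integral>\<^sup>+x. \<integral>\<^sup>+y. indicator Od (x, y) * D (x, y) \<partial>P2 x \<partial>M)"
  proof (rule nn_integral_mono)
    fix x assume x: "x \<in> space M"
    have sx: "{x} \<in> sets M"
    proof -
      have "Pair x -` Dg = {x}" using x unfolding Dg_def by auto
      then show ?thesis using sets_Pair1[OF Dgm] by metis
    qed
    have ex: "(\<lambda>y. eps x y) \<in> borel_measurable M"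
      using measurable_compose[OF measurable_Pair1'[OF x] em2] by simp
    have hx: "(\<lambda>y. D (x, y)) \<in> borel_measurable M" unfolding D_def prod.sel by measurable
    have "(\<integral>\<^sup>+y. ennreal (eps x y) * indicator Od (x, y) * D (x, y) \<partial>P1 x)
        = (\<integral>\<^sup>+y. ennreal (eps x y) * indicator (space M - {x}) y * D (x, y) \<partial>P1 x)"
      using x kernel_basic(3)[OF PM1 x] by (intro nn_integral_cong) (auto simp: Od_def Dg_def indicator_def)
    also have "\<dots> \<le> (\<integral>\<^sup>+y. indicator (space M - {x}) y * D (x, y) \<partial>P2 x)"
      by (rule minor_fun[where eps=eps, OF PM1 PM2 x ex sx minor[OF x] hx])
    also have "\<dots> = (\<integral>\<^sup>+y. indicator Od (x, y) * D (x, y) \<partial>P2 x)"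
      using x kernel_basic(3)[OF PM2 x] by (intro nn_integral_cong) (auto simp: Od_def Dg_def indicator_def)
    finally show "(\<integral>\<^sup>+y. ennreal (eps x y) * indicator Od (x, y) * D (x, y) \<partial>P1 x)
        \<le> (\<integral>\<^sup>+y. indicator Od (x, y) * D (x, y) \<partial>P2 x)" .
  qed
  also have "\<dots> \<le> (\<integral>\<^sup>+x. \<integral>\<^sup>+y. D (x, y) \<partial>P2 x \<partial>M)"
    by (intro nn_integral_mono) (auto simp: indicator_def)
  also have "\<dots> = (\<integral>\<^sup>+z. D z \<partial>Kp M P2)"
    by (subst Kp_nn[OF PM2]) simp_all
  finally show ?thesis unfolding D_def Aset_def by (simp add: mult_left_mono)
qed


theorem theorem36:
  fixes M :: "'a measure" and P1 P2 :: "'a \<Rightarrow> 'a measure"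
    and eps :: "'a \<Rightarrow> 'a \<Rightarrow> real" and p :: ereal and q :: real
  assumes "prob_space M"
    and "markov_kernel M P1" and "markov_kernel M P2"
    and "invariant_kernel M P1" and "invariant_kernel M P2"
    and diag: "{(x, y) \<in> space M \<times> space M. x = y} \<in> sets (M \<Otimes>\<^sub>M M)"
    and eps_meas: "(\<lambda>(x, y). eps x y) \<in> borel_measurable (M \<Otimes>\<^sub>M M)"
    and eps_pos: "\<And>x y. x \<in> space M \<Longrightarrow> y \<in> space M \<Longrightarrow> eps x y > 0"
    and minor: "\<And>x A. x \<in> space M \<Longrightarrow> A \<in> sets M \<Longrightarrow>
        emeasure (P2 x) (A - {x}) \<ge> (\<integral>\<^sup>+ y \<in> A - {x}. ennreal (eps x y) \<partial>P1 x)"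
    and "1 < p" and "1 \<le> q"
    and "inverse p + inverse (ereal q) = 1"
    and "s > 0"
    and "in_L2p_0 M p f"
  shows "dirichlet_form M P1 f \<le> s * dirichlet_form M P2 f
           + kernel_prod M P1 {(x, y) \<in> space M \<times> space M. \<not> (s * eps x y > 1) \<and> x \<noteq> y} powr (1 / q)
             * Phi M p f"
proof -
  note M = assms(1)
  interpret prob_space M by (rule M)
  have PM1: "P1 \<in> M \<rightarrow>\<^sub>M prob_algebra M" using assms(2) unfolding markov_kernel_def .
  have PM2: "P2 \<in> M \<rightarrow>\<^sub>M prob_algebra M" using assms(3) unfolding markov_kernel_def .
  note inv1 = assms(4) and inv2 = assms(5)
  note p1 = assms(10) and q1 = assms(11) and pq = assms(12) and s0 = assms(13) and fL = assms(14)
  have f[measurable]: "f \<in> borel_measurable M"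
    using fL unfolding in_L2p_0_def in_Lr_def in_Linf_def by (auto split: if_splits)
  note eps_meas[measurable]
  define Dg where "Dg = {(x, y) \<in> space M \<times> space M. x = y}"
  define As where "As = {(x, y) \<in> space M \<times> space M. 1 < s * eps x y \<and> x \<noteq> y}"
  define Bs where "Bs = {(x, y) \<in> space M \<times> space M. \<not> (s * eps x y > 1) \<and> x \<noteq> y}"
  define K1 where "K1 = Kp M P1"
  define K2 where "K2 = Kp M P2"
  define D where "D z = ennreal ((f (snd z) - f (fst z))\<^sup>2)" for z
  have Dgm[measurable]: "Dg \<in> sets (M \<Otimes>\<^sub>M M)" unfolding Dg_def by (rule diag)
  have Cm: "{z \<in> space (M \<Otimes>\<^sub>M M). 1 < s * (case z of (x, y) \<Rightarrow> eps x y)} \<in> sets (M \<Otimes>\<^sub>M M)"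
    by measurable
  have Cm': "{z \<in> space (M \<Otimes>\<^sub>M M). \<not> 1 < s * (case z of (x, y) \<Rightarrow> eps x y)} \<in> sets (M \<Otimes>\<^sub>M M)"
    by measurable
  have "As = {z \<in> space (M \<Otimes>\<^sub>M M). 1 < s * (case z of (x, y) \<Rightarrow> eps x y)} - Dg"
    unfolding As_def Dg_def by (auto simp: space_pair_measure)
  then have Asm[measurable]: "As \<in> sets (M \<Otimes>\<^sub>M M)" using Cm Dgm by auto
  have "Bs = {z \<in> space (M \<Otimes>\<^sub>M M). \<not> 1 < s * (case z of (x, y) \<Rightarrow> eps x y)} - Dg"
    unfolding Bs_def Dg_def by (auto simp: space_pair_measure)
  then have Bsm[measurable]: "Bs \<in> sets (M \<Otimes>\<^sub>M M)" using Cm' Dgm by auto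
  have sK1: "sets K1 = sets (M \<Otimes>\<^sub>M M)" unfolding K1_def by (rule Kp_sets[OF M PM1])
  have Dm[measurable]: "D \<in> borel_measurable (M \<Otimes>\<^sub>M M)" unfolding D_def by measurable
  have DK1: "D \<in> borel_measurable K1" using Dm measurable_cong_sets[OF sK1 refl] by blast
  have spK1: "space K1 = space M \<times> space M"
    using sets_eq_imp_space_eq[OF sK1] by (simp add: space_pair_measure)
  have f2: "integrable M (\<lambda>x. (f x)\<^sup>2)"
  proof (cases "p = \<infinity>")
    case True
    define C where "C = esssup M (\<lambda>x. ereal \<bar>f x\<bar>)"
    have Cfin: "C < \<infinity>" using fL True unfolding in_L2p_0_def in_Linf_def C_def by simp
    have "AE x in M. ereal \<bar>f x\<bar> \<le> C" unfolding C_def by (rule esssup_AE)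
    then have "AE x in M. norm ((f x)\<^sup>2) \<le> (real_of_ereal C)\<^sup>2"
    proof eventually_elim
      case (elim x)
      then have "\<bar>f x\<bar> \<le> real_of_ereal C" using Cfin
        by (cases C) auto
      then have "\<bar>f x\<bar>\<^sup>2 \<le> (real_of_ereal C)\<^sup>2" by (rule power_mono) simp
      then show ?case by simp
    qed
    then show ?thesis by (rule integrable_const_bound) simp
  next
    case False
    define r where "r = real_of_ereal p"
    have ir: "integrable M (\<lambda>x. \<bar>f x\<bar> powr (2 * r))"
      using fL False unfolding in_L2p_0_def in_Lr_def r_def by simp
    have r1: "1 < r" using p1 False unfolding r_def by (cases p) auto
    show ?thesis
    proof (rule Bochner_Integration.integrable_bound)
      show "integrable M (\<lambda>x. 1 + \<bar>f x\<bar> powr (2 * r))" using ir by simp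
      show "(\<lambda>x. (f x)\<^sup>2) \<in> borel_measurable M" by measurable
      show "AE x in M. norm ((f x)\<^sup>2) \<le> norm (1 + \<bar>f x\<bar> powr (2 * r))"
      proof (rule AE_I2)
        fix x
        have "(f x)\<^sup>2 \<le> 1 + \<bar>f x\<bar> powr (2 * r)"
        proof (cases "\<bar>f x\<bar> \<le> 1")
          case True
          then have a: "\<bar>f x\<bar>\<^sup>2 \<le> 1" by (intro power_le_one) auto
          have b: "0 \<le> \<bar>f x\<bar> powr (2 * r)" by simp
          have c: "(f x)\<^sup>2 = \<bar>f x\<bar>\<^sup>2" by simp
          from a b c show ?thesis by linarith
        next
          case False
          then have "\<bar>f x\<bar> powr 2 \<le> \<bar>f x\<bar> powr (2 * r)" using r1 by (intro powr_mono) auto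
          moreover have "\<bar>f x\<bar> powr 2 = (f x)\<^sup>2" using False by (simp add: powr_numeral)
          ultimately show ?thesis by simp
        qed
        then show "norm ((f x)\<^sup>2) \<le> norm (1 + \<bar>f x\<bar> powr (2 * r))" by simp
      qed
    qed
  qed
  have I1fin: "integral\<^sup>N K1 D < \<infinity>" and E1: "dirichlet_form M P1 f = enn2real (integral\<^sup>N K1 D) / 2"
    using dirichlet_eq[OF M PM1 inv1 f f2] unfolding K1_def D_def by auto
  have I2fin: "integral\<^sup>N K2 D < \<infinity>" and E2: "dirichlet_form M P2 f = enn2real (integral\<^sup>N K2 D) / 2"
    using dirichlet_eq[OF M PM2 inv2 f f2] unfolding K2_def D_def by auto
  have split: "integral\<^sup>N K1 D = (\<integral>\<^sup>+z. D z * indicator As z \<partial>K1) + (\<integral>\<^sup>+z. D z * indicator Bs z \<partial>K1)"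
  proof -
    have "integral\<^sup>N K1 D = (\<integral>\<^sup>+z. D z * indicator As z + D z * indicator Bs z \<partial>K1)"
    proof (rule nn_integral_cong)
      fix z assume z: "z \<in> space K1"
      then obtain x y where zz: "z = (x, y)" "x \<in> space M" "y \<in> space M" using spK1 by auto
      show "D z = D z * indicator As z + D z * indicator Bs z"
        using zz by (cases "x = y") (auto simp: As_def Bs_def D_def indicator_def)
    qed
    also have "\<dots> = (\<integral>\<^sup>+z. D z * indicator As z \<partial>K1) + (\<integral>\<^sup>+z. D z * indicator Bs z \<partial>K1)"
      using DK1 sK1 by (intro nn_integral_add) auto
    finally show ?thesis .
  qed
  have partA': "(\<integral>\<^sup>+z. D z * indicator As z \<partial>K1) \<le> ennreal s * integral\<^sup>N K2 D"
  proof -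
    have s00: "0 \<le> s" using s0 by simp
    show ?thesis
      using partA[OF M PM1 PM2 diag eps_meas minor s00 f Asm[unfolded As_def]]
      unfolding K1_def K2_def D_def As_def .
  qed
  define kp where "kp = kernel_prod M P1 Bs"
  have kp_eq: "kp = measure K1 Bs"
    unfolding kp_def kernel_prod_def K1_def measure_def using Kp_emeasure[OF M PM1 Bsm] by simp
  have kp0: "0 \<le> kp" using kp_eq by simp
  have partB': "(\<integral>\<^sup>+z. D z * indicator Bs z \<partial>K1) \<le> ennreal (2 * kp powr (1 / q) * Phi M p f)"
  proof (cases "p = \<infinity>")
    case True
    have "q = 1"
    proof -
      have "inverse (ereal q) = 1" using pq True by simp
      then show ?thesis using q1 by (cases "q = 0") (auto simp: one_ereal_def)
    qed
    have fi: "in_Linf M f" using fL True unfolding in_L2p_0_def by simp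
    have "(\<integral>\<^sup>+z. D z * indicator Bs z \<partial>K1) \<le> ennreal (measure K1 Bs * (osc_norm M f)\<^sup>2)"
      using partB_inf[OF M PM1 inv1 f fi Bsm] unfolding K1_def D_def .
    also have "\<dots> \<le> ennreal (2 * kp powr (1 / q) * Phi M p f)"
      using True \<open>q = 1\<close> kp0 unfolding kp_eq[symmetric] Phi_def
      by (intro ennreal_leI) (simp add: mult_right_mono)
    finally show ?thesis .
  next
    case False
    define r where "r = real_of_ereal p"
    have per: "p = ereal r" using p1 False unfolding r_def by (cases p) auto
    have r1: "1 < r" using p1 per by simp
    have ir: "integrable M (\<lambda>x. \<bar>f x\<bar> powr (2 * r))"
      using fL False unfolding in_L2p_0_def in_Lr_def r_def by simp
    have q0: "q \<noteq> 0" using q1 by auto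
    have rq: "1 / r + 1 / q = 1"
      using pq r1 q0 unfolding per by (simp add: divide_inverse one_ereal_def)
    have qq: "1 < q"
    proof (rule ccontr)
      assume "\<not> 1 < q"
      then have "q = 1" using q1 by simp
      then show False using rq r1 by simp
    qed
    define Nf where "Nf = (\<integral>x. \<bar>f x\<bar> powr (2 * r) \<partial>M)"
    have Nf0: "0 \<le> Nf" unfolding Nf_def by simp
    have "(\<integral>\<^sup>+z. D z * indicator Bs z \<partial>K1) \<le> ennreal (measure K1 Bs powr (1/q) * (8 * Nf powr (1/r)))"
      using partB_fin[OF M PM1 inv1 f r1 qq rq ir Bsm] unfolding K1_def D_def Nf_def .
    also have "measure K1 Bs powr (1/q) * (8 * Nf powr (1/r)) = 2 * kp powr (1 / q) * Phi M p f"
    proof -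
      have "(Lr_norm M (2 * r) f)\<^sup>2 = Nf powr (1/r)"
        unfolding Lr_norm_def Nf_def[symmetric] power2_eq_square
        using r1 by (simp add: powr_add[symmetric])
      then show ?thesis unfolding Phi_def kp_eq using False by (simp add: r_def)
    qed
    finally show ?thesis .
  qed
  have T0: "0 \<le> 2 * kp powr (1 / q) * Phi M p f"
    unfolding Phi_def by simp
  have "integral\<^sup>N K1 D \<le> ennreal s * integral\<^sup>N K2 D + ennreal (2 * kp powr (1 / q) * Phi M p f)"
    unfolding split by (rule add_mono[OF partA' partB'])
  then have "enn2real (integral\<^sup>N K1 D) \<le> enn2real (ennreal s * integral\<^sup>N K2 D + ennreal (2 * kp powr (1 / q) * Phi M p f))"
    using I2fin by (intro enn2real_mono) (auto simp: ennreal_mult_less_top)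
  also have "\<dots> = s * enn2real (integral\<^sup>N K2 D) + 2 * kp powr (1 / q) * Phi M p f"
    using I2fin s0 T0 by (subst enn2real_plus) (auto simp: ennreal_mult_less_top enn2real_mult)
  finally have "enn2real (integral\<^sup>N K1 D) \<le> s * enn2real (integral\<^sup>N K2 D) + 2 * kp powr (1 / q) * Phi M p f" .
  then show ?thesis unfolding E1 E2 kp_def[symmetric] Bs_def[symmetric] by simp
qed

end
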